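(* Let $n>2$ be an even integer and let $\Phi^{(n,n/2)}:M_n\to M_n$ be defined by $\Phi^{(n,n/2)}([a_{ij}])=\operatorname{diag}(b_1,\dots,b_n)-[a_{ij}]$ with $b_i=(n-1)a_{ii}+a_{\sigma(i),\sigma(i)}$, where $\sigma(i)\equiv i+n/2\pmod n$, $\sigma(i)\in\{1,\dots,n\}$. Then $\Phi^{(n,n/2)}$ is a decomposable positive linear map.
   Context: A linear map $\phi:M_n\to M_n$ is decomposable if $\phi=\phi_1+\phi_2$ where $\phi_1$ is completely positive and $\phi_2$ is completely copositive (i.e. $\phi_2$ composed with the transpose map is completely positive). *)

theory Defs
  imports Complex_Main
begin

text \<open>Square complex matrices of size n are represented as functions
  nat \<Rightarrow> nat \<Rightarrow> complex; only the entries with indices i, j < n matter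
  (indices are 0-based: 0..n-1 corresponds to 1..n).\<close>

type_synonym cmat = "nat \<Rightarrow> nat \<Rightarrow> complex"

definition psd :: "nat \<Rightarrow> cmat \<Rightarrow> bool" where
  "psd m A \<longleftrightarrow> (\<forall>x :: nat \<Rightarrow> complex.
     let q = (\<Sum>i<m. \<Sum>j<m. cnj (x i) * A i j * x j) in Im q = 0 \<and> Re q \<ge> 0)"

definition mat_transpose :: "cmat \<Rightarrow> cmat" where
  "mat_transpose A = (\<lambda>i j. A j i)"

definition linear_map_n :: "nat \<Rightarrow> (cmat \<Rightarrow> cmat) \<Rightarrow> bool" where
  "linear_map_n n \<phi> \<longleftrightarrow> (\<forall>A B c i j. i < n \<longrightarrow> j < n \<longrightarrow>
      \<phi> (\<lambda>a b. A a b + B a b) i j = \<phi> A i j + \<phi> B i j \<and>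
      \<phi> (\<lambda>a b. c * A a b) i j = c * \<phi> A i j)"

definition positive_map :: "nat \<Rightarrow> (cmat \<Rightarrow> cmat) \<Rightarrow> bool" where
  "positive_map n \<phi> \<longleftrightarrow> (\<forall>A. psd n A \<longrightarrow> psd n (\<phi> A))"

text \<open>A k x k block matrix with n x n blocks X p q, viewed as a (k n) x (k n) matrix.\<close>
definition flatten :: "nat \<Rightarrow> (nat \<Rightarrow> nat \<Rightarrow> cmat) \<Rightarrow> cmat" where
  "flatten n X = (\<lambda>i j. X (i div n) (j div n) (i mod n) (j mod n))"

text \<open>Complete positivity: id_k \<otimes> \<phi> is positive on M_k(M_n) for every k.\<close>
definition completely_positive :: "nat \<Rightarrow> (cmat \<Rightarrow> cmat) \<Rightarrow> bool" where
  "completely_positive n \<phi> \<longleftrightarrow> (\<forall>k X. psd (k * n) (flatten n X) \<longrightarrow>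
      psd (k * n) (flatten n (\<lambda>p q. \<phi> (X p q))))"

definition completely_copositive :: "nat \<Rightarrow> (cmat \<Rightarrow> cmat) \<Rightarrow> bool" where
  "completely_copositive n \<phi> \<longleftrightarrow> completely_positive n (\<phi> \<circ> mat_transpose)"

definition decomposable :: "nat \<Rightarrow> (cmat \<Rightarrow> cmat) \<Rightarrow> bool" where
  "decomposable n \<phi> \<longleftrightarrow> (\<exists>\<phi>1 \<phi>2. linear_map_n n \<phi>1 \<and> linear_map_n n \<phi>2 \<and>
      completely_positive n \<phi>1 \<and> completely_copositive n \<phi>2 \<and>
      (\<forall>A i j. i < n \<longrightarrow> j < n \<longrightarrow> \<phi> A i j = \<phi>1 A i j + \<phi>2 A i j))"

definition sigma_shift :: "nat \<Rightarrow> nat \<Rightarrow> nat" where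
  "sigma_shift n i = (i + n div 2) mod n"

definition Phi :: "nat \<Rightarrow> cmat \<Rightarrow> cmat" where
  "Phi n A = (\<lambda>i j. (if i = j then (of_nat n - 1) * A i i
                      + A (sigma_shift n i) (sigma_shift n i) else 0) - A i j)"

end

theory Submission
  imports Defs "HOL-Library.Complex_Order"
begin

definition BB :: "nat \<Rightarrow> cmat \<Rightarrow> (nat\<Rightarrow>complex) \<Rightarrow> (nat\<Rightarrow>complex) \<Rightarrow> complex" where
  "BB n M u v = (\<Sum>i<n. \<Sum>j<n. cnj (u i) * M i j * v j)"

definition FF :: "nat \<Rightarrow> nat \<Rightarrow> (nat\<Rightarrow>nat\<Rightarrow>cmat) \<Rightarrow> (nat\<Rightarrow>nat\<Rightarrow>complex) \<Rightarrow> complex" where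
  "FF k n X y = (\<Sum>p<k. \<Sum>q<k. BB n (X p q) (y p) (y q))"

lemma sum_split_mult: "(\<Sum>I<(k::nat)*n. f I) = (\<Sum>p<k. \<Sum>i<n. f (p*n+i))"
proof (induction k)
  case 0 then show ?case by simp
next
  case (Suc k)
  have "{..<Suc k * n} = {..<k*n} \<union> {k*n..<k*n+n}" by auto
  then have "(\<Sum>I<Suc k*n. f I) = (\<Sum>I<k*n. f I) + (\<Sum>I\<in>{k*n..<k*n+n}. f I)"
    by (simp add: sum.union_disjoint ivl_disj_int)
  also have "(\<Sum>I\<in>{k*n..<k*n+n}. f I) = (\<Sum>i<n. f (k*n+i))"
    using sum.shift_bounds_nat_ivl[of f 0 "k*n" n] by (simp add: atLeast0LessThan add.commute)
  finally show ?case using Suc by simp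
qed

lemma psd_le: "psd m A \<longleftrightarrow> (\<forall>x. 0 \<le> BB m A x x)"
  by (simp add: psd_def BB_def less_eq_complex_def Let_def) blast

lemma flat_form:
  assumes "n > 0"
  shows "(\<Sum>I<k*n. \<Sum>J<k*n. cnj (x I) * flatten n X I J * x J) = FF k n X (\<lambda>p i. x (p*n+i))"
proof -
  have "(\<Sum>I<k*n. \<Sum>J<k*n. cnj (x I) * flatten n X I J * x J)
     = (\<Sum>p<k. \<Sum>i<n. \<Sum>q<k. \<Sum>j<n. cnj (x (p*n+i)) * X p q i j * x (q*n+j))"
    using assms by (simp add: sum_split_mult flatten_def)
  also have "\<dots> = (\<Sum>p<k. \<Sum>q<k. \<Sum>i<n. \<Sum>j<n. cnj (x (p*n+i)) * X p q i j * x (q*n+j))"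
    by (rule sum.cong[OF refl], rule sum.swap)
  finally show ?thesis by (simp add: FF_def BB_def)
qed

lemma FF_cong:
  assumes "\<And>p i. p < k \<Longrightarrow> i < n \<Longrightarrow> y p i = y' p i"
  shows "FF k n X y = FF k n X y'"
  unfolding FF_def BB_def using assms by (intro sum.cong refl) auto

lemma psd_flat_iff:
  assumes "n > 0"
  shows "psd (k*n) (flatten n X) \<longleftrightarrow> (\<forall>y. 0 \<le> FF k n X y)"
proof
  assume h: "psd (k*n) (flatten n X)"
  show "\<forall>y. 0 \<le> FF k n X y"
  proof
    fix y
    define x where "x = (\<lambda>I. y (I div n) (I mod n) :: complex)"
    have "0 \<le> (\<Sum>I<k*n. \<Sum>J<k*n. cnj (x I) * flatten n X I J * x J)"
      using h by (simp add: psd_le BB_def)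
    then have "0 \<le> FF k n X (\<lambda>p i. x (p*n+i))"
      by (simp only: flat_form[OF assms])
    also have "FF k n X (\<lambda>p i. x (p*n+i)) = FF k n X y"
      using assms by (intro FF_cong) (simp add: x_def)
    finally show "0 \<le> FF k n X y" .
  qed
next
  assume "\<forall>y. 0 \<le> FF k n X y"
  then show "psd (k*n) (flatten n X)"
    using flat_form[OF assms] by (simp add: psd_le BB_def)
qed

lemma cp_kraus:
  assumes "n > 0" and "finite R"
    and K: "\<And>M u v. 2 * BB n (\<phi> M) u v = (\<Sum>r\<in>R. BB n M (g r u) (g r v))"
  shows "completely_positive n \<phi>"
  unfolding completely_positive_def
proof (intro allI impI)
  fix k X assume "psd (k*n) (flatten n X)"
  then have h: "\<forall>y. 0 \<le> FF k n X y" using psd_flat_iff[OF assms(1)] by simp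
  have "\<forall>y. 0 \<le> FF k n (\<lambda>p q. \<phi> (X p q)) y"
  proof
    fix y
    have "2 * FF k n (\<lambda>p q. \<phi> (X p q)) y = (\<Sum>p<k. \<Sum>q<k. \<Sum>r\<in>R. BB n (X p q) (g r (y p)) (g r (y q)))"
      by (simp add: FF_def sum_distrib_left K)
    also have "\<dots> = (\<Sum>r\<in>R. FF k n X (\<lambda>p. g r (y p)))"
      unfolding FF_def by (simp add: sum.swap[of _ R])
    also have "\<dots> \<ge> 0" using h by (simp add: sum_nonneg)
    finally have "0 \<le> 2 * FF k n (\<lambda>p q. \<phi> (X p q)) y" .
    then show "0 \<le> FF k n (\<lambda>p q. \<phi> (X p q)) y"
      by (simp add: less_eq_complex_def)
  qed
  then show "psd (k*n) (flatten n (\<lambda>p q. \<phi> (X p q)))" using psd_flat_iff[OF assms(1)] by simp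
qed

lemma sig_lt: "n > 0 \<Longrightarrow> sigma_shift n i < n"
  by (simp add: sigma_shift_def)

lemma sig_sig: "even n \<Longrightarrow> i < n \<Longrightarrow> sigma_shift n (sigma_shift n i) = i"
proof -
  assume "even n" "i < n"
  then obtain b where b: "n = 2*b" by (auto elim!: evenE)
  have "(i + b + b) mod (2*b) = (i + 2*b) mod (2*b)" by (simp add: mult_2 add.assoc)
  then show ?thesis using b \<open>i<n\<close> by (simp add: sigma_shift_def mod_add_left_eq)
qed

lemma sig_ne: "n > 2 \<Longrightarrow> i < n \<Longrightarrow> sigma_shift n i \<noteq> i"
proof
  assume "n > 2" "i < n" "sigma_shift n i = i"
  then have "(i + n div 2) mod n = i" by (simp add: sigma_shift_def)
  moreover have "n div 2 > 0" "n div 2 < n" using \<open>n>2\<close> by auto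
  ultimately show False using \<open>i<n\<close>
    by (cases "i + n div 2 < n") (auto simp: mod_if split: if_splits)
qed

lemma sum_sig: assumes "even n" "n > 0"
  shows "(\<Sum>i<n. f (sigma_shift n i)) = (\<Sum>i<n. (f i :: complex))"
  by (rule sum.reindex_bij_witness[where i="sigma_shift n" and j="sigma_shift n"])
     (use assms in \<open>auto simp: sig_lt sig_sig\<close>)

lemma D1: "q < (n::nat) \<Longrightarrow> (\<Sum>l'<n. f l' * (if l'=q then y else 0)) = f q * (y::complex)"
proof -
  assume "q<n"
  have "(\<Sum>l'<n. f l' * (if l'=q then y else 0)) = (\<Sum>l'<n. if l'=q then f l' * y else 0)"
    by (rule sum.cong) auto
  then show ?thesis using \<open>q<n\<close> by simp
qed
lemma D2: "p < (n::nat) \<Longrightarrow> (\<Sum>l<n. (if l=p then x else 0) * f l) = x * (f p::complex)"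
proof -
  assume "p<n"
  have "(\<Sum>l<n. (if l=p then x else 0) * f l) = (\<Sum>l<n. if l=p then x * f l else 0)"
    by (rule sum.cong) auto
  then show ?thesis using \<open>p<n\<close> by simp
qed
lemma D: "p < n \<Longrightarrow> q < (n::nat) \<Longrightarrow> (\<Sum>l<n. \<Sum>l'<n. (if l=p then x else 0) * M l l' * (if l'=q then y else 0)) = x * M p q * (y::complex)"
proof -
  assume a: "p<n" "q<n"
  have "(\<Sum>l<n. \<Sum>l'<n. (if l=p then x else 0) * M l l' * (if l'=q then y else 0)) = 
     (\<Sum>l<n. (if l=p then x else 0) * (M l q * y))"
    by (rule sum.cong[OF refl], subst D1[OF a(2)]) (simp add: mult.assoc)
  also have "\<dots> = x * M p q * y" using D2[OF a(1)] by (simp add: mult.assoc)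
  finally show ?thesis .
qed

definition zz :: "nat \<Rightarrow> nat \<Rightarrow> complex \<Rightarrow> complex \<Rightarrow> nat \<Rightarrow> complex" where
  "zz i j a b = (\<lambda>l. (if l = i then a else 0) - (if l = j then b else 0))"

lemma BB_zz:
  assumes "i < n" "j < n" "i \<noteq> j"
  shows "BB n M (zz i j a b) (zz i j c d) =
    cnj a * M i i * c - cnj a * M i j * d - cnj b * M j i * c + cnj b * M j j * d"
proof -
  have E: "cnj (zz i j a b l) * M l l' * zz i j c d l' =
     (if l=i then cnj a else 0) * M l l' * (if l'=i then c else 0)
   - (if l=i then cnj a else 0) * M l l' * (if l'=j then d else 0)
   - (if l=j then cnj b else 0) * M l l' * (if l'=i then c else 0)
   + (if l=j then cnj b else 0) * M l l' * (if l'=j then d else 0)" for l l'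
    by (simp add: zz_def algebra_simps)
  show ?thesis
    unfolding BB_def E
    by (simp only: sum.distrib sum_subtractf D assms)
qed


definition phi1 :: "nat \<Rightarrow> cmat \<Rightarrow> cmat" where
  "phi1 n M = (\<lambda>i j. of_bool (i = j) * (of_nat n - 2) * M i j
     - of_bool (j \<noteq> i \<and> j \<noteq> sigma_shift n i) * M i j)"

definition phi2 :: "nat \<Rightarrow> cmat \<Rightarrow> cmat" where
  "phi2 n M = (\<lambda>i j. of_bool (i = j) * M (sigma_shift n i) (sigma_shift n i)
     - of_bool (j = sigma_shift n i) * M i j)"

lemma delta_sum: "i < (n::nat) \<Longrightarrow> (\<Sum>j<n. of_bool (i = j) * f j) = (f i :: complex)"
proof -
  assume "i<n"
  have "(\<Sum>j<n. of_bool (i = j) * f j) = (\<Sum>j<n. if j = i then f j else 0)"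
    by (rule sum.cong) auto
  then show ?thesis using \<open>i<n\<close> by simp
qed

lemma card_S:
  assumes "n > 2" "i < n"
  shows "(\<Sum>j<n. of_bool (j \<noteq> i \<and> j \<noteq> sigma_shift n i) :: complex) = of_nat n - 2"
proof -
  have "{..<n} \<inter> {j. j \<noteq> i \<and> j \<noteq> sigma_shift n i} = {..<n} - {i, sigma_shift n i}" by auto
  moreover have "card ({..<n} - {i, sigma_shift n i}) = n - 2"
    using assms sig_ne[OF assms] sig_lt[of n i] by (subst card_Diff_subset) auto
  ultimately show ?thesis using assms by (simp add: of_nat_diff)
qed

lemma S_sym: "even n \<Longrightarrow> i < n \<Longrightarrow> j < n \<Longrightarrow>
   (j \<noteq> i \<and> j \<noteq> sigma_shift n i) = (i \<noteq> j \<and> i \<noteq> sigma_shift n j)"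
  using sig_sig by metis

lemma kraus1:
  assumes "even n" "n > 2"
  shows "2 * BB n (phi1 n M) u v = (\<Sum>r\<in>{..<n}\<times>{..<n}.
     BB n M ((\<lambda>(i,j) u. if j \<noteq> i \<and> j \<noteq> sigma_shift n i then zz i j (u i) (u j) else (\<lambda>_. 0)) r u)
            ((\<lambda>(i,j) u. if j \<noteq> i \<and> j \<noteq> sigma_shift n i then zz i j (u i) (u j) else (\<lambda>_. 0)) r v))"
proof -
  define s where "s = (\<lambda>i j. of_bool (j \<noteq> i \<and> j \<noteq> sigma_shift n i) :: complex)"
  define T1 where "T1 = (\<Sum>i<n. \<Sum>j<n. s i j * (cnj (u i) * M i i * v i))"
  define T2 where "T2 = (\<Sum>i<n. \<Sum>j<n. s i j * (cnj (u i) * M i j * v j))"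
  define T3 where "T3 = (\<Sum>i<n. \<Sum>j<n. s i j * (cnj (u j) * M j i * v i))"
  define T4 where "T4 = (\<Sum>i<n. \<Sum>j<n. s i j * (cnj (u j) * M j j * v j))"
  have ssym: "s i j = s j i" if "i<n" "j<n" for i j
    unfolding s_def using S_sym[OF assms(1) that] by simp
  have T4: "T4 = T1"
  proof -
    have "T4 = (\<Sum>j<n. \<Sum>i<n. s i j * (cnj (u j) * M j j * v j))" unfolding T4_def by (rule sum.swap)
    also have "\<dots> = T1" unfolding T1_def
      by (intro sum.cong refl) (simp add: ssym)
    finally show ?thesis .
  qed
  have T3: "T3 = T2"
  proof -
    have "T3 = (\<Sum>j<n. \<Sum>i<n. s i j * (cnj (u j) * M j i * v i))" unfolding T3_def by (rule sum.swap)
    also have "\<dots> = T2" unfolding T2_def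
      by (intro sum.cong refl) (simp add: ssym)
    finally show ?thesis .
  qed
  have T1': "T1 = (\<Sum>i<n. (of_nat n - 2) * (cnj (u i) * M i i * v i))"
    unfolding T1_def
  proof (intro sum.cong refl)
    fix i assume "i \<in> {..<n}"
    have "(\<Sum>j<n. s i j) = of_nat n - 2" unfolding s_def using card_S assms \<open>i \<in> {..<n}\<close> by simp
    then show "(\<Sum>j<n. s i j * (cnj (u i) * M i i * v i)) = (of_nat n - 2) * (cnj (u i) * M i i * v i)"
      by (simp add: sum_distrib_right[symmetric])
  qed
  have "(\<Sum>r\<in>{..<n}\<times>{..<n}.
     BB n M ((\<lambda>(i,j) u. if j \<noteq> i \<and> j \<noteq> sigma_shift n i then zz i j (u i) (u j) else (\<lambda>_. 0)) r u)
            ((\<lambda>(i,j) u. if j \<noteq> i \<and> j \<noteq> sigma_shift n i then zz i j (u i) (u j) else (\<lambda>_. 0)) r v))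
     = (\<Sum>i<n. \<Sum>j<n. s i j * (cnj (u i) * M i i * v i - cnj (u i) * M i j * v j
           - cnj (u j) * M j i * v i + cnj (u j) * M j j * v j))"
    apply (subst sum.cartesian_product)
    apply (intro sum.cong refl)
    apply (auto simp: s_def BB_zz)
    apply (simp_all add: BB_def)
    done
  also have "\<dots> = T1 - T2 - T3 + T4"
    unfolding T1_def T2_def T3_def T4_def
    by (simp add: algebra_simps sum.distrib sum_subtractf)
  also have "\<dots> = 2 * (T1 - T2)" using T3 T4 by simp
  also have "BB n (phi1 n M) u v = T1 - T2"
  proof -
    have "BB n (phi1 n M) u v = (\<Sum>i<n. \<Sum>j<n. of_bool (i = j) * ((of_nat n - 2) * (cnj (u i) * M i j * v j)))
        - T2"
      unfolding BB_def phi1_def T2_def s_def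
      by (simp add: algebra_simps sum.distrib sum_subtractf)
    also have "(\<Sum>i<n. \<Sum>j<n. of_bool (i = j) * ((of_nat n - 2) * (cnj (u i) * M i j * v j)))
       = (\<Sum>i<n. (of_nat n - 2) * (cnj (u i) * M i i * v i))"
      by (intro sum.cong refl) (simp add: delta_sum)
    finally show ?thesis using T1' by simp
  qed
  ultimately show ?thesis by simp
qed

lemma delta_sum': "i < (n::nat) \<Longrightarrow> (\<Sum>j<n. of_bool (j = i) * f j) = (f i :: complex)"
  using delta_sum[of i n f] by (simp add: eq_commute)

lemma kraus2:
  assumes "even n" "n > 2"
  shows "2 * BB n ((phi2 n \<circ> mat_transpose) M) u v = (\<Sum>i\<in>{..<n}.
     BB n M ((\<lambda>i u. zz (sigma_shift n i) i (u i) (u (sigma_shift n i))) i u)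
            ((\<lambda>i u. zz (sigma_shift n i) i (u i) (u (sigma_shift n i))) i v))"
proof -
  let ?s = "sigma_shift n"
  have n0: "n > 0" using assms by simp
  define A1 where "A1 = (\<Sum>i<n. cnj (u i) * M (?s i) (?s i) * v i)"
  define A2 where "A2 = (\<Sum>i<n. cnj (u i) * M (?s i) i * v (?s i))"
  define A3 where "A3 = (\<Sum>i<n. cnj (u (?s i)) * M i (?s i) * v i)"
  define A4 where "A4 = (\<Sum>i<n. cnj (u (?s i)) * M i i * v (?s i))"
  have A4: "A4 = A1"
  proof -
    have "A4 = (\<Sum>i<n. (\<lambda>i. cnj (u (?s i)) * M i i * v (?s i)) (?s i))"
      unfolding A4_def by (rule sum_sig[OF assms(1) n0, symmetric])
    also have "\<dots> = A1" unfolding A1_def by (intro sum.cong refl) (simp add: sig_sig assms)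
    finally show ?thesis .
  qed
  have A3: "A3 = A2"
  proof -
    have "A3 = (\<Sum>i<n. (\<lambda>i. cnj (u (?s i)) * M i (?s i) * v i) (?s i))"
      unfolding A3_def by (rule sum_sig[OF assms(1) n0, symmetric])
    also have "\<dots> = A2" unfolding A2_def by (intro sum.cong refl) (simp add: sig_sig assms)
    finally show ?thesis .
  qed
  have "(\<Sum>i\<in>{..<n}.
     BB n M ((\<lambda>i u. zz (?s i) i (u i) (u (?s i))) i u)
            ((\<lambda>i u. zz (?s i) i (u i) (u (?s i))) i v)) = A1 - A2 - A3 + A4"
  proof -
    have "(\<Sum>i\<in>{..<n}.
     BB n M ((\<lambda>i u. zz (?s i) i (u i) (u (?s i))) i u)
            ((\<lambda>i u. zz (?s i) i (u i) (u (?s i))) i v))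
      = (\<Sum>i<n. cnj (u i) * M (?s i) (?s i) * v i - cnj (u i) * M (?s i) i * v (?s i)
          - cnj (u (?s i)) * M i (?s i) * v i + cnj (u (?s i)) * M i i * v (?s i))"
      by (intro sum.cong refl) (simp add: BB_zz sig_lt n0 sig_ne assms)
    then show ?thesis unfolding A1_def A2_def A3_def A4_def
      by (simp add: sum.distrib sum_subtractf)
  qed
  moreover have "BB n ((phi2 n \<circ> mat_transpose) M) u v = A1 - A2"
  proof -
    have "BB n ((phi2 n \<circ> mat_transpose) M) u v =
       (\<Sum>i<n. \<Sum>j<n. of_bool (i = j) * (cnj (u i) * M (?s i) (?s i) * v j))
     - (\<Sum>i<n. \<Sum>j<n. of_bool (j = ?s i) * (cnj (u i) * M j i * v j))"
      unfolding BB_def phi2_def mat_transpose_def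
      by (simp add: algebra_simps sum.distrib sum_subtractf)
    also have "\<dots> = A1 - A2" unfolding A1_def A2_def
      by (simp add: delta_sum delta_sum' sig_lt n0)
    finally show ?thesis .
  qed
  ultimately show ?thesis using A3 A4 by simp
qed


lemma BB_T: "BB n (mat_transpose A) w w = BB n A (\<lambda>i. cnj (w i)) (\<lambda>i. cnj (w i))"
proof -
  have "BB n (mat_transpose A) w w = (\<Sum>j<n. \<Sum>i<n. cnj (w i) * A j i * w j)"
    unfolding BB_def mat_transpose_def by (rule sum.swap)
  then show ?thesis unfolding BB_def by (simp add: algebra_simps)
qed

lemma half_nonneg: "0 \<le> 2 * (c::complex) \<Longrightarrow> 0 \<le> c"
  by (simp add: less_eq_complex_def)

theorem corollary3:
  fixes n :: nat
  assumes "even n" and "n > 2"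
  shows "linear_map_n n (Phi n) \<and> positive_map n (Phi n) \<and> decomposable n (Phi n)"
proof -
  have n0: "n > 0" using assms by simp
  have split: "Phi n A i j = phi1 n A i j + phi2 n A i j" if "i < n" "j < n" for A i j
  proof (cases "i = j")
    case True
    then have "j \<noteq> sigma_shift n i" using sig_ne[OF assms(2) that(1)] by simp
    then show ?thesis using True by (simp add: Phi_def phi1_def phi2_def field_simps)
  next
    case False
    then show ?thesis by (simp add: Phi_def phi1_def phi2_def)
  qed
  have lin: "linear_map_n n (Phi n)"
    unfolding linear_map_n_def Phi_def by (simp add: algebra_simps)
  have lin1: "linear_map_n n (phi1 n)"
    unfolding linear_map_n_def phi1_def by (simp add: algebra_simps)
  have lin2: "linear_map_n n (phi2 n)"
    unfolding linear_map_n_def phi2_def by (simp add: algebra_simps)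
  have cp1: "completely_positive n (phi1 n)"
    by (rule cp_kraus[OF n0 _ kraus1[OF assms]]) simp
  have cp2: "completely_copositive n (phi2 n)"
    unfolding completely_copositive_def
    by (rule cp_kraus[OF n0 _ kraus2[OF assms]]) simp
  have pos: "positive_map n (Phi n)"
    unfolding positive_map_def
  proof (intro allI impI)
    fix A assume hA: "psd n A"
    show "psd n (Phi n A)"
      unfolding psd_le
    proof
      fix x
      have "BB n (Phi n A) x x = BB n (phi1 n A) x x + BB n (phi2 n A) x x"
      proof -
        have "BB n (Phi n A) x x = (\<Sum>i<n. \<Sum>j<n. cnj (x i) * phi1 n A i j * x j + cnj (x i) * phi2 n A i j * x j)"
          unfolding BB_def by (intro sum.cong refl) (simp add: split distrib_left distrib_right)
        then show ?thesis by (simp add: BB_def sum.distrib)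
      qed
      moreover have "0 \<le> BB n (phi1 n A) x x"
        apply (rule half_nonneg)
        apply (subst kraus1[OF assms])
        apply (rule sum_nonneg)
        using hA by (simp add: psd_le)
      moreover have "0 \<le> BB n (phi2 n A) x x"
      proof -
        have "phi2 n A = (phi2 n \<circ> mat_transpose) (mat_transpose A)"
          by (simp add: mat_transpose_def)
        then show ?thesis
          apply (simp only:)
          apply (rule half_nonneg)
          apply (subst kraus2[OF assms])
          apply (rule sum_nonneg)
          using hA by (simp add: psd_le BB_T)
      qed
      ultimately show "0 \<le> BB n (Phi n A) x x" by simp
    qed
  qed
  have "decomposable n (Phi n)"
    unfolding decomposable_def using lin1 lin2 cp1 cp2 split by blast
  then show ?thesis using lin pos by blast
qed

end
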